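(* Let $r$ be a positive real number such that $1, r, r^2, r^3$ are linearly independent over $\mathbb{Q}$, and let $\Lambda \subset \mathbb{C}^2$ be the lattice generated by the column vectors of the period matrix $$P = \begin{pmatrix} 1 & 0 & \sqrt{-1}\,r^3 & r \\ 0 & 1 & r & \sqrt{-1} \end{pmatrix}.$$ Then the $2$-dimensional complex torus $\mathbb{A} = \mathbb{C}^2/\Lambda$ is a simple abelian variety.
   Context: An abelian variety is a complex torus admitting a positive line bundle (equivalently a polarization). An abelian variety is simple if it contains no complex subtorus other than $0$ and itself; for a $2$-dimensional torus this means it contains no $1$-dimensional complex subtorus. *)

theory Defs
  imports "HOL-Analysis.Analysis"
begin

definition cscale :: "complex \<Rightarrow> complex \<times> complex \<Rightarrow> complex \<times> complex" where
  "cscale c z = (c * fst z, c * snd z)"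

definition period_col :: "real \<Rightarrow> nat \<Rightarrow> complex \<times> complex" where
  "period_col r k =
     (if k = 0 then (1, 0)
      else if k = 1 then (0, 1)
      else if k = 2 then (\<i> * of_real (r ^ 3), of_real r)
      else (of_real r, \<i>))"

definition lattice_gen :: "(nat \<Rightarrow> complex \<times> complex) \<Rightarrow> (complex \<times> complex) set" where
  "lattice_gen v = {(\<Sum>k<4. of_int (n k) *\<^sub>R v k) | n :: nat \<Rightarrow> int. True}"

text \<open>The four generators are R-linearly independent, so they generate a lattice
  of full rank in C^2 = R^4 and C^2/Lambda is a complex torus.\<close>
definition full_lattice_gens :: "(nat \<Rightarrow> complex \<times> complex) \<Rightarrow> bool" where
  "full_lattice_gens v \<longleftrightarrow>
     (\<forall>a :: nat \<Rightarrow> real. (\<Sum>k<4. a k *\<^sub>R v k) = 0 \<longrightarrow> (\<forall>k<4. a k = 0))"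

text \<open>Riemann form (polarization) on C^2 with respect to the lattice Lambda:
  an R-bilinear alternating form E, integer-valued on Lambda, invariant under
  multiplication by i, such that the associated Hermitian form
  H(x,y) = E(ix,y) + i E(x,y) is positive definite.\<close>
definition riemann_form ::
  "(complex \<times> complex) set \<Rightarrow> (complex \<times> complex \<Rightarrow> complex \<times> complex \<Rightarrow> real) \<Rightarrow> bool" where
  "riemann_form \<Lambda> E \<longleftrightarrow>
     bilinear E \<and>
     (\<forall>x. E x x = 0) \<and>
     (\<forall>x\<in>\<Lambda>. \<forall>y\<in>\<Lambda>. E x y \<in> \<int>) \<and>
     (\<forall>x y. E (cscale \<i> x) (cscale \<i> y) = E x y) \<and>
     (\<forall>x. x \<noteq> 0 \<longrightarrow> E (cscale \<i> x) x > 0)"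

definition abelian_variety :: "(nat \<Rightarrow> complex \<times> complex) \<Rightarrow> bool" where
  "abelian_variety v \<longleftrightarrow> full_lattice_gens v \<and> (\<exists>E. riemann_form (lattice_gen v) E)"

definition complex_subspace :: "(complex \<times> complex) set \<Rightarrow> bool" where
  "complex_subspace V \<longleftrightarrow> 0 \<in> V \<and> (\<forall>x\<in>V. \<forall>y\<in>V. x + y \<in> V) \<and> (\<forall>c. \<forall>x\<in>V. cscale c x \<in> V)"

text \<open>Complex subtori of C^2/Lambda correspond to complex subspaces V such that
  V \<inter> Lambda spans V over R (i.e. V \<inter> Lambda is a lattice in V).\<close>
definition simple_torus :: "(nat \<Rightarrow> complex \<times> complex) \<Rightarrow> bool" where
  "simple_torus v \<longleftrightarrow>
     (\<forall>V. complex_subspace V \<and> span (V \<inter> lattice_gen v) = V \<longrightarrow> V = {0} \<or> V = UNIV)"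

end

theory Submission
  imports Defs
begin

definition lv :: "real \<Rightarrow> int \<Rightarrow> int \<Rightarrow> int \<Rightarrow> int \<Rightarrow> complex \<times> complex" where
  "lv r n0 n1 n2 n3 = (Complex (of_int n0 + of_int n3 * r) (of_int n2 * r^3),
                       Complex (of_int n1 + of_int n2 * r) (of_int n3))"

lemma lat_sum:
  "(\<Sum>k<4. a k *\<^sub>R period_col r k) =
   (Complex (a 0 + a 3 * r) (a 2 * r^3), Complex (a 1 + a 2 * r) (a 3))"
  by (simp add: numeral_eq_Suc period_col_def scaleR_prod_def complex_eq_iff scaleR_conv_of_real)

lemma full: assumes "r \<noteq> 0" shows "full_lattice_gens (period_col r)"
  unfolding full_lattice_gens_def lat_sum
proof (intro allI impI)
  fix a :: "nat \<Rightarrow> real" and k :: nat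
  assume h: "(Complex (a 0 + a 3 * r) (a 2 * r^3), Complex (a 1 + a 2 * r) (a 3)) = 0" and k: "k < 4"
  from h have e: "a 0 + a 3 * r = 0" "a 2 * r^3 = 0" "a 1 + a 2 * r = 0" "a 3 = 0"
    by (auto simp: complex_eq_iff zero_prod_def)
  have "a 2 = 0" using e(2) assms by simp
  with e have z: "a 0 = 0" "a 1 = 0" "a 2 = 0" "a 3 = 0" by auto
  have "k = 0 \<or> k = 1 \<or> k = 2 \<or> k = 3" using k by auto
  then show "a k = 0" using z by auto
qed

definition EF :: "real \<Rightarrow> complex \<times> complex \<Rightarrow> complex \<times> complex \<Rightarrow> real" where
  "EF r x y = (Re (fst y) * Im (fst x) - Im (fst y) * Re (fst x)) / r^3
             + (Re (snd y) * Im (snd x) - Im (snd y) * Re (snd x))"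

lemma EF_bil: "bilinear (EF r)"
  unfolding bilinear_def
  by (auto intro!: linearI simp: EF_def algebra_simps add_divide_distrib diff_divide_distrib)

lemma EF_lat: assumes "r \<noteq> 0"
  shows "EF r (lv r n0 n1 n2 n3) (lv r m0 m1 m2 m3) = of_int (m0*n2 - m2*n0 + m1*n3 - m3*n1)"
  using assms by (simp add: EF_def lv_def field_simps power3_eq_cube)

lemma riemann: assumes "r > 0" shows "riemann_form (lattice_gen (period_col r)) (EF r)"
  unfolding riemann_form_def
proof (intro conjI ballI allI impI)
  show "bilinear (EF r)" by (rule EF_bil)
next
  fix x show "EF r x x = 0" by (simp add: EF_def)
next
  fix x y assume "x \<in> lattice_gen (period_col r)" "y \<in> lattice_gen (period_col r)"
  then obtain n m where x: "x = (\<Sum>k<4. of_int (n k) *\<^sub>R period_col r k)"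
    and y: "y = (\<Sum>k<4. of_int (m k) *\<^sub>R period_col r k)"
    by (auto simp: lattice_gen_def)
  have "x = lv r (n 0) (n 1) (n 2) (n 3)" "y = lv r (m 0) (m 1) (m 2) (m 3)"
    unfolding x y lat_sum lv_def by simp_all
  then show "EF r x y \<in> \<int>" using assms EF_lat by simp
next
  fix x y show "EF r (cscale \<i> x) (cscale \<i> y) = EF r x y"
    by (simp add: EF_def cscale_def algebra_simps)
next
  fix x :: "complex \<times> complex" assume "x \<noteq> 0"
  then have "fst x \<noteq> 0 \<or> snd x \<noteq> 0" by (auto simp: prod_eq_iff)
  then have "Re (fst x) ^ 2 + Im (fst x) ^ 2 > 0 \<or> Re (snd x) ^ 2 + Im (snd x) ^ 2 > 0"
    by (auto simp: complex_eq_iff add_pos_nonneg add_nonneg_pos)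
  moreover have "EF r (cscale \<i> x) x = (Re (fst x) ^ 2 + Im (fst x) ^ 2) / r^3 + (Re (snd x) ^ 2 + Im (snd x) ^ 2)"
    by (simp add: EF_def cscale_def power2_eq_square)
  moreover have "(Re (fst x) ^ 2 + Im (fst x) ^ 2) / r^3 \<ge> 0" using assms by simp
  moreover have "(Re (fst x) ^ 2 + Im (fst x) ^ 2) / r^3 > 0 \<or> Re (fst x) ^ 2 + Im (fst x) ^ 2 \<le> 0"
    using assms by (auto simp: divide_pos_pos)
  ultimately show "EF r (cscale \<i> x) x > 0"
    by (smt (verit) sum_power2_ge_zero zero_le_power2)
qed

lemma lat_iff:
  "x \<in> lattice_gen (period_col r) \<longleftrightarrow> (\<exists>n0 n1 n2 n3. x = lv r n0 n1 n2 n3)"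
proof
  assume "x \<in> lattice_gen (period_col r)"
  then obtain n where "x = (\<Sum>k<4. of_int (n k) *\<^sub>R period_col r k)"
    by (auto simp: lattice_gen_def)
  then show "\<exists>n0 n1 n2 n3. x = lv r n0 n1 n2 n3"
    by (auto simp: lat_sum lv_def)
next
  assume "\<exists>n0 n1 n2 n3. x = lv r n0 n1 n2 n3"
  then obtain n0 n1 n2 n3 where x: "x = lv r n0 n1 n2 n3" by blast
  define n where "n = (\<lambda>k::nat. if k = 0 then n0 else if k = 1 then n1 else if k = 2 then n2 else n3)"
  have "x = (\<Sum>k<4. of_int (n k) *\<^sub>R period_col r k)"
    unfolding lat_sum x by (simp add: n_def lv_def)
  then show "x \<in> lattice_gen (period_col r)" by (auto simp: lattice_gen_def)
qed

lemma indep_int: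
  assumes ind: "\<forall>a b c d :: rat.
           of_rat a + of_rat b * r + of_rat c * r ^ 2 + of_rat d * r ^ 3 = 0
           \<longrightarrow> a = 0 \<and> b = 0 \<and> c = 0 \<and> d = 0"
    and e: "of_int a + of_int b * r + of_int c * r ^ 2 + of_int d * r ^ 3 = (0::real)"
  shows "a = 0 \<and> b = 0 \<and> c = 0 \<and> d = 0"
proof -
  have "of_rat (of_int a) + of_rat (of_int b) * r + of_rat (of_int c) * r ^ 2 + of_rat (of_int d) * r ^ 3 = 0"
    using e by simp
  then have "(of_int a :: rat) = 0 \<and> (of_int b :: rat) = 0 \<and> (of_int c :: rat) = 0 \<and> (of_int d :: rat) = 0"
    using ind by blast
  then show ?thesis by simp
qed

lemma lv_scale:
  assumes "real_of_int m0 = t * of_int n0" "real_of_int m1 = t * of_int n1"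
    "real_of_int m2 = t * of_int n2" "real_of_int m3 = t * of_int n3"
  shows "lv r m0 m1 m2 m3 = t *\<^sub>R lv r n0 n1 n2 n3"
  using assms by (simp add: lv_def scaleR_prod_def complex_eq_iff algebra_simps)

lemma prop_int:
  fixes n0 n1 n2 n3 m0 m1 m2 m3 :: int
  assumes "n0*m1 = n1*m0" "n0*m2 = n2*m0" "n0*m3 = n3*m0" "n1*m2 = n2*m1" "n1*m3 = n3*m1" "n2*m3 = n3*m2"
    and "\<not> (n0 = 0 \<and> n1 = 0 \<and> n2 = 0 \<and> n3 = 0)"
  shows "\<exists>t. lv r m0 m1 m2 m3 = t *\<^sub>R lv r n0 n1 n2 n3"
proof -
  have R: "real_of_int n0 * m1 = real_of_int n1 * m0" "real_of_int n0 * m2 = real_of_int n2 * m0"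
    "real_of_int n0 * m3 = real_of_int n3 * m0" "real_of_int n1 * m2 = real_of_int n2 * m1"
    "real_of_int n1 * m3 = real_of_int n3 * m1" "real_of_int n2 * m3 = real_of_int n3 * m2"
    using assms(1-6) by (metis of_int_mult)+
  consider "n0 \<noteq> 0" | "n1 \<noteq> 0" | "n2 \<noteq> 0" | "n3 \<noteq> 0" using assms(7) by blast
  then show ?thesis
  proof cases
    case 1 then show ?thesis using R
      by (intro exI[of _ "m0 / n0"] lv_scale) (auto simp: field_simps)
  next
    case 2 then show ?thesis using R
      by (intro exI[of _ "m1 / n1"] lv_scale) (auto simp: field_simps)
  next
    case 3 then show ?thesis using R
      by (intro exI[of _ "m2 / n2"] lv_scale) (auto simp: field_simps)
  next
    case 4 then show ?thesis using R
      by (intro exI[of _ "m3 / n3"] lv_scale) (auto simp: field_simps)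
  qed
qed

lemma det_zero:
  fixes r :: real and n0 n1 n2 n3 m0 m1 m2 m3 :: int
  assumes ind: "\<forall>a b c d :: rat.
           of_rat a + of_rat b * r + of_rat c * r ^ 2 + of_rat d * r ^ 3 = 0
           \<longrightarrow> a = 0 \<and> b = 0 \<and> c = 0 \<and> d = 0"
    and l: "l = lv r n0 n1 n2 n3" and m: "m = lv r m0 m1 m2 m3"
    and d: "fst l * snd m = snd l * fst m" and nz: "l \<noteq> 0"
  shows "m \<in> span {l}"
proof -
  have re: "(real_of_int n0 + real_of_int n3*r)*(real_of_int m1 + real_of_int m2*r) - real_of_int n2*r^3*real_of_int m3 = (real_of_int m0 + real_of_int m3*r)*(real_of_int n1 + real_of_int n2*r) - real_of_int m2*r^3*real_of_int n3"
    using arg_cong[OF d, of Re] by (simp add: l m lv_def)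
  have im: "(real_of_int n0 + real_of_int n3*r)*real_of_int m3 + real_of_int n2*r^3*(real_of_int m1 + real_of_int m2*r) = (real_of_int m0 + real_of_int m3*r)*real_of_int n3 + real_of_int m2*r^3*(real_of_int n1 + real_of_int n2*r)"
    using arg_cong[OF d, of Im] by (simp add: l m lv_def algebra_simps)
  have "of_int (n0*m1 - m0*n1) + of_int (n0*m2 + n3*m1 - m0*n2 - m3*n1) * r
        + of_int (n3*m2 - m3*n2) * r^2 + of_int (m2*n3 - n2*m3) * r^3 = (0::real)"
    using re by (simp add: algebra_simps power2_eq_square power3_eq_cube)
  then have A: "n0*m1 - m0*n1 = 0" "n0*m2 + n3*m1 - m0*n2 - m3*n1 = 0" "n3*m2 - m3*n2 = 0"
    using indep_int[OF ind] by blast+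
  have "of_int (n0*m3 - m0*n3) + of_int 0 * r
        + of_int 0 * r^2 + of_int (n2*m1 - m2*n1) * r^3 = (0::real)"
    using im by (simp add: algebra_simps power2_eq_square power3_eq_cube)
  then have B: "n0*m3 - m0*n3 = 0" "n2*m1 - m2*n1 = 0"
    using indep_int[OF ind] by blast+
  have pl: "(n0*m2 - m0*n2) * (m3*n1 - n3*m1) = (n0*m1 - n1*m0)*(n2*m3 - n3*m2) + (n0*m3 - n3*m0)*(n1*m2 - n2*m1)"
    by (simp add: algebra_simps)
  have z1: "n0*m1 - n1*m0 = 0" "n1*m2 - n2*m1 = 0" using A B by (simp_all add: mult.commute)
  have z2: "m3*n1 - n3*m1 = n0*m2 - m0*n2" using A(2) by simp
  have "(n0*m2 - m0*n2) * (n0*m2 - m0*n2) = 0"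
    using pl unfolding z1 z2 by simp
  then have C: "n0*m2 - m0*n2 = 0" by simp
  have nz': "\<not> (n0 = 0 \<and> n1 = 0 \<and> n2 = 0 \<and> n3 = 0)"
    using nz by (auto simp: l lv_def zero_prod_def complex_eq_iff)
  have "\<exists>t. lv r m0 m1 m2 m3 = t *\<^sub>R lv r n0 n1 n2 n3"
    by (intro prop_int) (use A B C nz' in \<open>auto simp: algebra_simps\<close>)
  then obtain t where "m = t *\<^sub>R l" using l m by blast
  then show ?thesis by (simp add: span_base span_scale)
qed

lemma line_univ:
  assumes V: "complex_subspace V" and l: "l \<in> V" and m: "m \<in> V"
    and d: "fst l * snd m \<noteq> snd l * fst m"
  shows "V = UNIV"
proof -
  { fix z :: "complex \<times> complex"
    define D where "D = fst l * snd m - snd l * fst m"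
    have D: "D \<noteq> 0" using d by (simp add: D_def)
    define a where "a = (fst z * snd m - snd z * fst m) / D"
    define b where "b = (fst l * snd z - snd l * fst z) / D"
    have e1: "a * fst l + b * fst m = fst z"
    proof -
      have "a * fst l + b * fst m = ((fst z * snd m - snd z * fst m) * fst l + (fst l * snd z - snd l * fst z) * fst m) / D"
        by (simp add: a_def b_def add_divide_distrib)
      also have "\<dots> = fst z * D / D" by (simp add: D_def algebra_simps)
      finally show ?thesis using D by simp
    qed
    have e2: "a * snd l + b * snd m = snd z"
    proof -
      have "a * snd l + b * snd m = ((fst z * snd m - snd z * fst m) * snd l + (fst l * snd z - snd l * fst z) * snd m) / D"
        by (simp add: a_def b_def add_divide_distrib)
      also have "\<dots> = snd z * D / D" by (simp add: D_def algebra_simps)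
      finally show ?thesis using D by simp
    qed
    have "z = cscale a l + cscale b m"
      using e1 e2 by (simp add: cscale_def prod_eq_iff)
    moreover have "cscale a l + cscale b m \<in> V"
      using V l m by (simp add: complex_subspace_def)
    ultimately have "z \<in> V" by simp }
  then show ?thesis by auto
qed

lemma simple:
  assumes ind: "\<forall>a b c d :: rat.
           of_rat a + of_rat b * r + of_rat c * r ^ 2 + of_rat d * r ^ 3 = 0
           \<longrightarrow> a = 0 \<and> b = 0 \<and> c = 0 \<and> d = 0"
  shows "simple_torus (period_col r)"
  unfolding simple_torus_def
proof (intro allI impI)
  fix V assume h: "complex_subspace V \<and> span (V \<inter> lattice_gen (period_col r)) = V"
  then have V: "complex_subspace V" and sp: "span (V \<inter> lattice_gen (period_col r)) = V" by auto
  show "V = {0} \<or> V = UNIV"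
  proof (rule ccontr)
    assume nt: "\<not> (V = {0} \<or> V = UNIV)"
    have "\<exists>l\<in>V \<inter> lattice_gen (period_col r). l \<noteq> 0"
    proof (rule ccontr)
      assume "\<not> ?thesis"
      then have "V \<inter> lattice_gen (period_col r) \<subseteq> {0}" by auto
      then have "span (V \<inter> lattice_gen (period_col r)) \<subseteq> span {0}" by (rule span_mono)
      then have "V \<subseteq> {0}" using sp by simp
      moreover have "0 \<in> V" using V by (simp add: complex_subspace_def)
      ultimately show False using nt by auto
    qed
    then obtain l where lV: "l \<in> V" and lL: "l \<in> lattice_gen (period_col r)" and l0: "l \<noteq> 0" by blast
    obtain n0 n1 n2 n3 where ln: "l = lv r n0 n1 n2 n3" using lL lat_iff by blast
    have sub: "V \<inter> lattice_gen (period_col r) \<subseteq> span {l}"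
    proof
      fix m assume mm: "m \<in> V \<inter> lattice_gen (period_col r)"
      obtain m0 m1 m2 m3 where mn: "m = lv r m0 m1 m2 m3" using mm lat_iff by blast
      have "fst l * snd m = snd l * fst m"
        using line_univ[OF V lV, of m] mm nt by auto
      then show "m \<in> span {l}" using det_zero[OF ind ln mn _ l0] by simp
    qed
    have "cscale \<i> l \<in> V" using V lV by (simp add: complex_subspace_def)
    also have "V \<subseteq> span {l}" using span_mono[OF sub] sp by (simp add: span_span)
    finally obtain t where t: "cscale \<i> l = t *\<^sub>R l" by (auto simp: span_singleton)
    have "fst l \<noteq> 0 \<or> snd l \<noteq> 0" using l0 by (auto simp: prod_eq_iff)
    moreover have "\<i> * fst l = of_real t * fst l" "\<i> * snd l = of_real t * snd l"
      using t by (auto simp: cscale_def scaleR_prod_def prod_eq_iff scaleR_conv_of_real)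
    ultimately have "\<i> = of_real t" by auto
    then show False by (simp add: complex_eq_iff)
  qed
qed

theorem lemma2:
  fixes r :: real
  assumes "r > 0"
    and "\<forall>a b c d :: rat.
           of_rat a + of_rat b * r + of_rat c * r ^ 2 + of_rat d * r ^ 3 = 0
           \<longrightarrow> a = 0 \<and> b = 0 \<and> c = 0 \<and> d = 0"
  shows "abelian_variety (period_col r) \<and> simple_torus (period_col r)"
  using full[of r] riemann[OF assms(1)] simple[OF assms(2)] assms(1)
  unfolding abelian_variety_def by auto

end
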